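(* Let $W,V$ be B-DMCs, $N=2^n$, $i\in\{1,\dots,N\}$, and let $y_1^{2N}$ be distributed according to $W(y_1^{2N}|0_1^{2N})=W(y_1^N|0_1^N)W(y_{N+1}^{2N}|0_1^N)$. Write $L_1=L_{V_N^{(i)}}(y_1^N)$. For $j\in\{2i-1,2i\}$ and $\bowtie\in\{\ge,\le\}$ define, for $b\in\{0,1\}$, $g^{\bowtie}_j(b)=\mathbb E_W\big[\mathbf 1\{L_{V_{2N}^{(j)}}(y_1^{2N})\bowtie1\}\,\big|\,\mathbf 1\{L_1\bowtie1\}=b\big]$ (whenever the conditioning event has positive probability). Then: (a) $g^{\ge}_{2i}(1)\ge g^{\ge}_{2i}(0)$ and $g^{\le}_{2i}(1)\ge g^{\le}_{2i}(0)$; (b) if $\mathbb P_W[L_{V_N^{(i)}}(y_1^N)\le1]\ge\mathbb P_W[L_{V_N^{(i)}}(y_1^N)\ge1]$, then $g^{\ge}_{2i-1}(1)\ge g^{\ge}_{2i-1}(0)$ and $g^{\le}_{2i-1}(1)\ge g^{\le}_{2i-1}(0)$.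
   Context: A B-DMC $W:\{0,1\}\to\mathcal Y$ is given by transition probabilities $W(y|x)$, $\mathcal Y$ finite; $L_W(y)=W(y|1)/W(y|0)$. For a B-DMC $W$: $W^-(y_1y_2|u_1)=\sum_{u_2}\tfrac12W(y_1|u_1\oplus u_2)W(y_2|u_2)$, $W^+(y_1y_2u_1|u_2)=\tfrac12W(y_1|u_1\oplus u_2)W(y_2|u_2)$. Synthetic channels: $W_1^{(1)}=W$, $W_{2N}^{(2i-1)}=(W_N^{(i)})^-$, $W_{2N}^{(2i)}=(W_N^{(i)})^+$; an output of $V_N^{(i)}$ is written $(y_1^N,u_1^{i-1})$ as in Arıkan's construction and $L_{V_N^{(i)}}(y_1^N):=L_{V_N^{(i)}}(y_1^N,0_1^{i-1})$. With $L_1=L_{V_N^{(i)}}(y_1^N)$, $L_2=L_{V_N^{(i)}}(y_{N+1}^{2N})$: $L_{V_{2N}^{(2i-1)}}(y_1^{2N})=\frac{L_1+L_2}{1+L_1L_2}$, $L_{V_{2N}^{(2i)}}(y_1^{2N})=L_1L_2$. Notation: $W(y_1^N|0_1^N)=\prod_jW(y_j|0)$, $\mathbb P_W[E]=\sum_{y_1^N}W(y_1^N|0_1^N)\mathbf 1\{E\}$. *)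

theory Defs
  imports Complex_Main "HOL-Library.Extended_Real"
begin

text \<open>Binary-input DMC with finite output alphabet 'y; the input alphabet {0,1}
  is encoded by bool (False = 0, True = 1).  W y x stands for W(y|x).\<close>
definition bdmc :: "('y::finite \<Rightarrow> bool \<Rightarrow> real) \<Rightarrow> bool" where
  "bdmc W \<longleftrightarrow> (\<forall>y x. 0 \<le> W y x) \<and> (\<forall>x. (\<Sum>y\<in>UNIV. W y x) = 1)"

text \<open>Universal output alphabet for synthetic channels: Leaf y is an output of W,
  MinusOut a b is an output (a,b) of C^-, PlusOut a b u1 is an output (a,b,u1) of C^+.\<close>
datatype 'y chout = Leaf 'y | MinusOut "'y chout" "'y chout" | PlusOut "'y chout" "'y chout" bool

fun lift_ch :: "('y \<Rightarrow> bool \<Rightarrow> real) \<Rightarrow> 'y chout \<Rightarrow> bool \<Rightarrow> real" where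
  "lift_ch W (Leaf y) x = W y x"
| "lift_ch W _ _ = 0"

fun minus_ch :: "('y chout \<Rightarrow> bool \<Rightarrow> real) \<Rightarrow> 'y chout \<Rightarrow> bool \<Rightarrow> real" where
  "minus_ch C (MinusOut a b) u1 = (\<Sum>u2\<in>(UNIV::bool set). 1/2 * C a (u1 \<noteq> u2) * C b u2)"
| "minus_ch C _ _ = 0"

fun plus_ch :: "('y chout \<Rightarrow> bool \<Rightarrow> real) \<Rightarrow> 'y chout \<Rightarrow> bool \<Rightarrow> real" where
  "plus_ch C (PlusOut a b u1) u2 = 1/2 * C a (u1 \<noteq> u2) * C b u2"
| "plus_ch C _ _ = 0"

text \<open>synth W n i = W_N^{(i)} with N = 2^n, 1 \<le> i \<le> N:
  W_1^{(1)} = W, W_{2N}^{(2i-1)} = (W_N^{(i)})^-, W_{2N}^{(2i)} = (W_N^{(i)})^+.\<close>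
fun synth :: "('y \<Rightarrow> bool \<Rightarrow> real) \<Rightarrow> nat \<Rightarrow> nat \<Rightarrow> 'y chout \<Rightarrow> bool \<Rightarrow> real" where
  "synth W 0 i = lift_ch W"
| "synth W (Suc n) j = (if even j then plus_ch else minus_ch) (synth W n ((j + 1) div 2))"

text \<open>zero_out n i ys is the output (y_1^N, 0_1^{i-1}) of W_N^{(i)} (ys of length N = 2^n),
  following Arikan's identification of outputs.\<close>
fun zero_out :: "nat \<Rightarrow> nat \<Rightarrow> 'y list \<Rightarrow> 'y chout" where
  "zero_out 0 i ys = Leaf (hd ys)"
| "zero_out (Suc n) j ys =
     (let i = (j + 1) div 2;
          a = zero_out n i (take (2^n) ys);
          b = zero_out n i (drop (2^n) ys)
      in if even j then PlusOut a b False else MinusOut a b)"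

text \<open>Likelihood ratio C(o|1)/C(o|0) in [0,\<infinity>]; convention c/0 = \<infinity> for c > 0, 0/0 = 1.\<close>
definition lr :: "('y chout \<Rightarrow> bool \<Rightarrow> real) \<Rightarrow> 'y chout \<Rightarrow> ereal" where
  "lr C z = (if C z False = 0 then (if C z True = 0 then 1 else \<infinity>)
             else ereal (C z True / C z False))"

definition synth_lr :: "('y \<Rightarrow> bool \<Rightarrow> real) \<Rightarrow> nat \<Rightarrow> nat \<Rightarrow> 'y list \<Rightarrow> ereal" where
  "synth_lr V n i ys = lr (synth V n i) (zero_out n i ys)"

definition probW :: "('y::finite \<Rightarrow> bool \<Rightarrow> real) \<Rightarrow> nat \<Rightarrow> ('y list \<Rightarrow> bool) \<Rightarrow> real" where
  "probW W m E = (\<Sum>ys\<in>{ys. length ys = m}.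
      if E ys then prod_list (map (\<lambda>y. W y False) ys) else 0)"

definition cond_event :: "('y \<Rightarrow> bool \<Rightarrow> real) \<Rightarrow> nat \<Rightarrow> nat \<Rightarrow> (ereal \<Rightarrow> ereal \<Rightarrow> bool)
    \<Rightarrow> bool \<Rightarrow> 'y list \<Rightarrow> bool" where
  "cond_event V n i R b ys \<longleftrightarrow> (R (synth_lr V n i (take (2^n) ys)) 1 = b)"

definition gcond :: "('y::finite \<Rightarrow> bool \<Rightarrow> real) \<Rightarrow> ('y \<Rightarrow> bool \<Rightarrow> real) \<Rightarrow> nat \<Rightarrow> nat \<Rightarrow> nat
    \<Rightarrow> (ereal \<Rightarrow> ereal \<Rightarrow> bool) \<Rightarrow> bool \<Rightarrow> real" where
  "gcond W V n i j R b =
     probW W (2 * 2^n) (\<lambda>ys. R (synth_lr V (Suc n) j ys) 1 \<and> cond_event V n i R b ys)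
     / probW W (2 * 2^n) (cond_event V n i R b)"

end

theory Submission
  imports Defs
begin

lemma synth_nonneg: "bdmc V \<Longrightarrow> 0 \<le> synth V n i z x"
proof (induction n arbitrary: i z x)
  case 0
  then show ?case by (cases z) (auto simp: bdmc_def)
next
  case (Suc n)
  show ?case
  proof (cases "even i")
    case True
    then show ?thesis using Suc by (cases z) (auto intro!: mult_nonneg_nonneg)
  next
    case False
    then show ?thesis using Suc by (cases z) (auto intro!: sum_nonneg mult_nonneg_nonneg)
  qed
qed

lemma lr_ge1: "0 \<le> C z False \<Longrightarrow> 0 \<le> C z True \<Longrightarrow> (lr C z \<ge> 1 \<longleftrightarrow> C z True \<ge> C z False)"
  by (auto simp: lr_def divide_simps)

lemma lr_le1: "0 \<le> C z False \<Longrightarrow> 0 \<le> C z True \<Longrightarrow> (lr C z \<le> 1 \<longleftrightarrow> C z True \<le> C z False)"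
  by (auto simp: lr_def divide_simps)

lemma sum_split_lists:
  fixes f :: "'a list \<Rightarrow> 'b::comm_monoid_add"
  shows "(\<Sum>ys\<in>{ys. length ys = m + k}. f ys) = (\<Sum>xs\<in>{xs. length xs = m}. \<Sum>zs\<in>{zs. length zs = k}. f (xs@zs))"
proof -
  have inj: "inj_on (\<lambda>(xs,zs). xs@zs) ({xs. length xs = m} \<times> {zs. length zs = k})"
    by (auto simp: inj_on_def)
  have img: "(\<lambda>(xs,zs). xs@zs) ` ({xs. length xs = m} \<times> {zs::'a list. length zs = k}) = {ys. length ys = m+k}"
  proof
    show "{ys. length ys = m+k} \<subseteq> (\<lambda>(xs,zs). xs@zs) ` ({xs. length xs = m} \<times> {zs::'a list. length zs = k})"
    proof
      fix ys :: "'a list" assume "ys \<in> {ys. length ys = m+k}"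
      then show "ys \<in> (\<lambda>(xs,zs). xs@zs) ` ({xs. length xs = m} \<times> {zs::'a list. length zs = k})"
        by (intro image_eqI[where x="(take m ys, drop m ys)"]) auto
    qed
  qed auto
  have "(\<Sum>ys\<in>{ys. length ys = m + k}. f ys) = (\<Sum>(xs,zs)\<in>{xs. length xs = m} \<times> {zs. length zs = k}. f (xs@zs))"
    using sum.reindex[OF inj, of f] img by (simp add: case_prod_unfold)
  also have "\<dots> = (\<Sum>xs\<in>{xs. length xs = m}. \<Sum>zs\<in>{zs. length zs = k}. f (xs@zs))"
    by (simp add: sum.cartesian_product)
  finally show ?thesis .
qed

lemma key:
  fixes p :: "'a \<Rightarrow> real"
  assumes p: "\<And>x. x \<in> S \<Longrightarrow> 0 \<le> p x"
    and hc: "\<And>x z. x \<in> S \<Longrightarrow> z \<in> S \<Longrightarrow> c x \<Longrightarrow> G z \<Longrightarrow> F x z"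
    and hn: "\<And>x z. x \<in> S \<Longrightarrow> z \<in> S \<Longrightarrow> \<not> c x \<Longrightarrow> F x z \<Longrightarrow> H z"
    and hk: "(\<Sum>z\<in>S. if H z then p z else 0) \<le> (\<Sum>z\<in>S. if G z then p z else 0)"
    and pos1: "(\<Sum>x\<in>S. \<Sum>z\<in>S. if c x then p x * p z else 0) > 0"
    and pos0: "(\<Sum>x\<in>S. \<Sum>z\<in>S. if \<not> c x then p x * p z else 0) > 0"
  shows "(\<Sum>x\<in>S. \<Sum>z\<in>S. if F x z \<and> \<not> c x then p x * p z else 0) / (\<Sum>x\<in>S. \<Sum>z\<in>S. if \<not> c x then p x * p z else 0)
       \<le> (\<Sum>x\<in>S. \<Sum>z\<in>S. if F x z \<and> c x then p x * p z else 0) / (\<Sum>x\<in>S. \<Sum>z\<in>S. if c x then p x * p z else 0)"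
proof -
  define T where "T = (\<Sum>z\<in>S. p z)"
  define P1 where "P1 = (\<Sum>x\<in>S. if c x then p x else 0)"
  define P0 where "P0 = (\<Sum>x\<in>S. if \<not> c x then p x else 0)"
  define k where "k = (\<Sum>z\<in>S. if G z then p z else 0)"
  define k' where "k' = (\<Sum>z\<in>S. if H z then p z else 0)"
  have d1: "(\<Sum>x\<in>S. \<Sum>z\<in>S. if c x then p x * p z else 0) = P1 * T"
    unfolding P1_def T_def sum_distrib_right
    by (rule sum.cong) (auto simp: sum_distrib_left)
  have d0: "(\<Sum>x\<in>S. \<Sum>z\<in>S. if \<not> c x then p x * p z else 0) = P0 * T"
    unfolding P0_def T_def sum_distrib_right
    by (rule sum.cong) (auto simp: sum_distrib_left)
  have P1: "P1 \<ge> 0" unfolding P1_def using p by (auto intro: sum_nonneg)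
  have P0: "P0 \<ge> 0" unfolding P0_def using p by (auto intro: sum_nonneg)
  have T: "T > 0" using pos1 d1 P1
    by (metis mult_eq_0_iff not_le order_less_le zero_less_mult_pos mult_nonneg_nonpos)
  have P1p: "P1 > 0" using pos1 d1 T by (metis mult_eq_0_iff order_less_le P1)
  have P0p: "P0 > 0" using pos0 d0 T by (metis mult_eq_0_iff order_less_le P0)
  have n1: "(\<Sum>x\<in>S. \<Sum>z\<in>S. if F x z \<and> c x then p x * p z else 0) \<ge> P1 * k"
    unfolding P1_def k_def sum_distrib_right
  proof (rule sum_mono)
    fix x assume x: "x \<in> S"
    show "(if c x then p x else 0) * (\<Sum>z\<in>S. if G z then p z else 0)
          \<le> (\<Sum>z\<in>S. if F x z \<and> c x then p x * p z else 0)"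
    proof (cases "c x")
      case True
      then show ?thesis unfolding sum_distrib_left
        using p x hc by (auto intro!: sum_mono)
    qed simp
  qed
  have n0: "(\<Sum>x\<in>S. \<Sum>z\<in>S. if F x z \<and> \<not> c x then p x * p z else 0) \<le> P0 * k'"
    unfolding P0_def k'_def sum_distrib_right
  proof (rule sum_mono)
    fix x assume x: "x \<in> S"
    show "(\<Sum>z\<in>S. if F x z \<and> \<not> c x then p x * p z else 0) \<le>
          (if \<not> c x then p x else 0) * (\<Sum>z\<in>S. if H z then p z else 0)"
    proof (cases "c x")
      case False
      then show ?thesis unfolding sum_distrib_left
        using p x hn by (auto intro!: sum_mono mult_nonneg_nonneg)
    qed simp
  qed
  have kk: "k' \<le> k" using hk by (simp add: k_def k'_def)
  have "(\<Sum>x\<in>S. \<Sum>z\<in>S. if F x z \<and> \<not> c x then p x * p z else 0) / (P0 * T) \<le> P0 * k' / (P0 * T)"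
    using n0 P0p T by (intro divide_right_mono) auto
  also have "\<dots> = k' / T" using P0p by simp
  also have "\<dots> \<le> k / T" using kk T by (intro divide_right_mono) auto
  also have "\<dots> = P1 * k / (P1 * T)" using P1p by simp
  also have "\<dots> \<le> (\<Sum>x\<in>S. \<Sum>z\<in>S. if F x z \<and> c x then p x * p z else 0) / (P1 * T)"
    using n1 P1p T by (intro divide_right_mono) auto
  finally show ?thesis using d0 d1 by simp
qed

lemma plus_lr:
  assumes "bdmc V" "length xs = 2^n"
  shows "synth_lr V (Suc n) (2*i) (xs@zs) =
     lr (\<lambda>_ u. 1/2 * synth V n i (zero_out n i xs) u * synth V n i (zero_out n i zs) u) (Leaf undefined)"
  using assms by (simp add: synth_lr_def lr_def Let_def)

lemma minus_lr:
  assumes "bdmc V" "length xs = 2^n" "1 \<le> i"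
  shows "synth_lr V (Suc n) (2*i-1) (xs@zs) =
     lr (\<lambda>_ u1. (\<Sum>u2\<in>(UNIV::bool set). 1/2 * synth V n i (zero_out n i xs) (u1 \<noteq> u2) * synth V n i (zero_out n i zs) u2)) (Leaf undefined)"
proof -
  have e: "\<not> even (2*i-1)" using assms(3) by presburger
  have d: "(2*i-1+1) div 2 = i" using assms(3) by simp
  show ?thesis using assms e d by (simp add: synth_lr_def lr_def Let_def)
qed

lemma ident: "uu*tt + vv*ss - (vv*tt + uu*ss) = -((uu-vv)*(ss-tt::real))"
  by (simp add: algebra_simps)

lemma m1: "uu \<ge> vv \<Longrightarrow> ss \<le> tt \<Longrightarrow> uu*tt + vv*ss \<ge> vv*tt + uu*(ss::real)"
  using ident[of uu tt vv ss] mult_nonneg_nonpos[of "uu-vv" "ss-tt"] by linarith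

lemma m2: "uu < vv \<Longrightarrow> uu*tt + vv*ss \<ge> vv*tt + uu*ss \<Longrightarrow> ss \<ge> (tt::real)"
  using ident[of uu tt vv ss] mult_neg_neg[of "uu-vv" "ss-tt"] by (cases "ss < tt") linarith+

lemma m3: "uu \<le> vv \<Longrightarrow> ss \<le> tt \<Longrightarrow> uu*tt + vv*ss \<le> vv*tt + uu*(ss::real)"
  using ident[of uu tt vv ss] mult_nonpos_nonpos[of "uu-vv" "ss-tt"] by linarith

lemma m4: "uu > vv \<Longrightarrow> uu*tt + vv*ss \<le> vv*tt + uu*ss \<Longrightarrow> ss \<ge> (tt::real)"
  using ident[of uu tt vv ss] mult_pos_neg[of "uu-vv" "ss-tt"] by (cases "ss < tt") linarith+

theorem proposition6:
  fixes W V :: "'y::finite \<Rightarrow> bool \<Rightarrow> real" and n i :: nat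
  assumes "bdmc W" and "bdmc V" and "1 \<le> i" and "i \<le> 2^n"
  shows "(\<forall>R \<in> {(\<ge>), (\<le>)}.
            probW W (2 * 2^n) (cond_event V n i R True) > 0 \<and>
            probW W (2 * 2^n) (cond_event V n i R False) > 0 \<longrightarrow>
            gcond W V n i (2 * i) R True \<ge> gcond W V n i (2 * i) R False)
       \<and> (probW W (2^n) (\<lambda>ys. synth_lr V n i ys \<le> 1) \<ge> probW W (2^n) (\<lambda>ys. synth_lr V n i ys \<ge> 1)
          \<longrightarrow> (\<forall>R \<in> {(\<ge>), (\<le>)}.
            probW W (2 * 2^n) (cond_event V n i R True) > 0 \<and>
            probW W (2 * 2^n) (cond_event V n i R False) > 0 \<longrightarrow>
            gcond W V n i (2 * i - 1) R True \<ge> gcond W V n i (2 * i - 1) R False))"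
proof -
  define S where "S = {xs::'y list. length xs = 2^n}"
  define p where "p = (\<lambda>xs. prod_list (map (\<lambda>y. W y False) xs))"
  define A where "A = (\<lambda>b xs. synth V n i (zero_out n i xs) b)"
  define L where "L = synth_lr V n i"
  have pnn: "\<And>x. 0 \<le> p x" unfolding p_def using assms(1)
    by (auto simp: bdmc_def intro!: prod_list_nonneg)
  have Ann: "\<And>b x. 0 \<le> A b x" unfolding A_def using synth_nonneg[OF assms(2)] by simp
  have Lge: "\<And>x. L x \<ge> 1 \<longleftrightarrow> A True x \<ge> A False x"
    unfolding L_def A_def synth_lr_def by (rule lr_ge1) (use Ann[unfolded A_def] in auto)
  have Lle: "\<And>x. L x \<le> 1 \<longleftrightarrow> A True x \<le> A False x"
    unfolding L_def A_def synth_lr_def by (rule lr_le1) (use Ann[unfolded A_def] in auto)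
  have probS: "\<And>E. probW W (2^n) E = (\<Sum>z\<in>S. if E z then p z else 0)"
    unfolding probW_def S_def p_def by simp
  have prob2: "\<And>E. probW W (2*2^n) E = (\<Sum>x\<in>S. \<Sum>z\<in>S. if E (x@z) then p x * p z else 0)"
    unfolding probW_def S_def p_def mult_2 sum_split_lists by (intro sum.cong refl) simp
  have cond: "\<And>R b x z. x \<in> S \<Longrightarrow> cond_event V n i R b (x@z) \<longleftrightarrow> (R (L x) 1 = b)"
    by (simp add: cond_event_def S_def L_def)
  have plus_ge: "synth_lr V (Suc n) (2*i) (x@z) \<ge> 1 \<longleftrightarrow> A True x * A True z \<ge> A False x * A False z"
    if "x \<in> S" for x z
  proof -
    have "synth_lr V (Suc n) (2*i) (x@z) \<ge> 1 \<longleftrightarrow> 1/2 * A True x * A True z \<ge> 1/2 * A False x * A False z"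
      unfolding A_def
      apply (subst plus_lr[OF assms(2)]) using that apply (simp add: S_def)
      by (rule lr_ge1) (use Ann[unfolded A_def] in auto)
    then show ?thesis by simp
  qed
  have plus_le: "synth_lr V (Suc n) (2*i) (x@z) \<le> 1 \<longleftrightarrow> A True x * A True z \<le> A False x * A False z"
    if "x \<in> S" for x z
  proof -
    have "synth_lr V (Suc n) (2*i) (x@z) \<le> 1 \<longleftrightarrow> 1/2 * A True x * A True z \<le> 1/2 * A False x * A False z"
      unfolding A_def
      apply (subst plus_lr[OF assms(2)]) using that apply (simp add: S_def)
      by (rule lr_le1) (use Ann[unfolded A_def] in auto)
    then show ?thesis by simp
  qed
  have minus_ge: "synth_lr V (Suc n) (2*i-1) (x@z) \<ge> 1 \<longleftrightarrow>
      A True x * A False z + A False x * A True z \<ge> A False x * A False z + A True x * A True z"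
    if "x \<in> S" for x z
  proof -
    have "synth_lr V (Suc n) (2*i-1) (x@z) \<ge> 1 \<longleftrightarrow>
      (\<Sum>u2\<in>(UNIV::bool set). 1/2 * A (True \<noteq> u2) x * A u2 z) \<ge> (\<Sum>u2\<in>(UNIV::bool set). 1/2 * A (False \<noteq> u2) x * A u2 z)"
      unfolding A_def
      apply (subst minus_lr[OF assms(2) _ assms(3)]) using that apply (simp add: S_def)
      by (rule lr_ge1) (use Ann[unfolded A_def] in \<open>auto intro!: sum_nonneg\<close>)
    then show ?thesis by (simp add: UNIV_bool algebra_simps) linarith
  qed
  have minus_le: "synth_lr V (Suc n) (2*i-1) (x@z) \<le> 1 \<longleftrightarrow>
      A True x * A False z + A False x * A True z \<le> A False x * A False z + A True x * A True z"
    if "x \<in> S" for x z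
  proof -
    have "synth_lr V (Suc n) (2*i-1) (x@z) \<le> 1 \<longleftrightarrow>
      (\<Sum>u2\<in>(UNIV::bool set). 1/2 * A (True \<noteq> u2) x * A u2 z) \<le> (\<Sum>u2\<in>(UNIV::bool set). 1/2 * A (False \<noteq> u2) x * A u2 z)"
      unfolding A_def
      apply (subst minus_lr[OF assms(2) _ assms(3)]) using that apply (simp add: S_def)
      by (rule lr_le1) (use Ann[unfolded A_def] in \<open>auto intro!: sum_nonneg\<close>)
    then show ?thesis by (simp add: UNIV_bool algebra_simps) linarith
  qed
  have gform: "gcond W V n i j R b =
     (\<Sum>x\<in>S. \<Sum>z\<in>S. if R (synth_lr V (Suc n) j (x@z)) 1 \<and> (R (L x) 1 = b) then p x * p z else 0) /
     (\<Sum>x\<in>S. \<Sum>z\<in>S. if R (L x) 1 = b then p x * p z else 0)" for j R b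
    unfolding gcond_def prob2
    by (intro arg_cong2[where f="(/)"] sum.cong refl) (simp_all add: cond)
  have main: "gcond W V n i j R False \<le> gcond W V n i j R True"
    if pos1: "probW W (2 * 2^n) (cond_event V n i R True) > 0"
      and pos0: "probW W (2 * 2^n) (cond_event V n i R False) > 0"
      and hc: "\<And>x z. x \<in> S \<Longrightarrow> z \<in> S \<Longrightarrow> R (L x) 1 \<Longrightarrow> G z \<Longrightarrow> R (synth_lr V (Suc n) j (x@z)) 1"
      and hn: "\<And>x z. x \<in> S \<Longrightarrow> z \<in> S \<Longrightarrow> \<not> R (L x) 1 \<Longrightarrow> R (synth_lr V (Suc n) j (x@z)) 1 \<Longrightarrow> H z"
      and hk: "probW W (2^n) H \<le> probW W (2^n) G"
    for j R G H
  proof -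
    have p1: "(\<Sum>x\<in>S. \<Sum>z\<in>S. if R (L x) 1 then p x * p z else 0) > 0"
      using pos1 unfolding prob2 by (simp add: cond cong: sum.cong)
    have p0: "(\<Sum>x\<in>S. \<Sum>z\<in>S. if \<not> R (L x) 1 then p x * p z else 0) > 0"
      using pos0 unfolding prob2 by (simp add: cond cong: sum.cong)
    have "(\<Sum>x\<in>S. \<Sum>z\<in>S. if R (synth_lr V (Suc n) j (x@z)) 1 \<and> \<not> R (L x) 1 then p x * p z else 0) /
          (\<Sum>x\<in>S. \<Sum>z\<in>S. if \<not> R (L x) 1 then p x * p z else 0)
       \<le> (\<Sum>x\<in>S. \<Sum>z\<in>S. if R (synth_lr V (Suc n) j (x@z)) 1 \<and> R (L x) 1 then p x * p z else 0) /
          (\<Sum>x\<in>S. \<Sum>z\<in>S. if R (L x) 1 then p x * p z else 0)"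
      by (rule key[where G=G and H=H, OF pnn hc hn _ p1 p0]) (use hk in \<open>simp_all add: probS\<close>)
    then show ?thesis unfolding gform by simp
  qed
  have aux1: "a1 * b1 \<ge> a0 * b0" if "a1 \<ge> a0" "b1 \<ge> b0" "a0 \<ge> 0" "b0 \<ge> 0" for a0 a1 b0 b1 :: real
    using that by (simp add: mult_mono)
  have aux2: "b1 \<ge> b0" if "a1 < a0" "a1 * b1 \<ge> a0 * b0" "a1 \<ge> 0" "b1 \<ge> 0" for a0 a1 b0 b1 :: real
  proof (rule ccontr)
    assume "\<not> b1 \<ge> b0"
    then have "a1 * b1 \<le> a1 * b0" using that by (simp add: mult_left_mono)
    also have "\<dots> < a0 * b0" using that \<open>\<not> b1 \<ge> b0\<close> by (simp add: mult_strict_right_mono)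
    finally show False using that by simp
  qed
  have part_a: "\<forall>R \<in> {(\<ge>), (\<le>)}.
            probW W (2 * 2^n) (cond_event V n i R True) > 0 \<and>
            probW W (2 * 2^n) (cond_event V n i R False) > 0 \<longrightarrow>
            gcond W V n i (2 * i) R True \<ge> gcond W V n i (2 * i) R False"
  proof (intro ballI impI, elim conjE)
    fix R :: "ereal \<Rightarrow> ereal \<Rightarrow> bool" assume R: "R \<in> {(\<ge>), (\<le>)}" and
      q1: "probW W (2 * 2^n) (cond_event V n i R True) > 0" and q0: "probW W (2 * 2^n) (cond_event V n i R False) > 0"
    show "gcond W V n i (2 * i) R True \<ge> gcond W V n i (2 * i) R False"
    proof (cases "R = (\<ge>)")
      case True
      show ?thesis unfolding True
        apply (rule main[where G="\<lambda>z. L z \<ge> 1" and H="\<lambda>z. L z \<ge> 1"])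
        using q1 q0 True apply simp_all
        subgoal for x z using aux1 Ann by (simp add: plus_ge Lge)
        subgoal for x z by (simp add: plus_ge Lge) (metis aux2 not_le Ann)
        done
    next
      case False
      then have Rle: "R = (\<le>)" using R by simp
      show ?thesis unfolding Rle
        apply (rule main[where G="\<lambda>z. L z \<le> 1" and H="\<lambda>z. L z \<le> 1"])
        using q1 q0 Rle apply simp_all
        subgoal for x z using aux1[of "A True x" "A False x" "A True z" "A False z"] Ann by (simp add: plus_le Lle)
        subgoal for x z by (simp add: plus_le Lle) (metis aux2 not_le Ann)
        done
    qed
  qed
  have part_b: "probW W (2^n) (\<lambda>ys. synth_lr V n i ys \<le> 1) \<ge> probW W (2^n) (\<lambda>ys. synth_lr V n i ys \<ge> 1)
          \<longrightarrow> (\<forall>R \<in> {(\<ge>), (\<le>)}.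
            probW W (2 * 2^n) (cond_event V n i R True) > 0 \<and>
            probW W (2 * 2^n) (cond_event V n i R False) > 0 \<longrightarrow>
            gcond W V n i (2 * i - 1) R True \<ge> gcond W V n i (2 * i - 1) R False)"
  proof (intro impI ballI, elim conjE)
    fix R :: "ereal \<Rightarrow> ereal \<Rightarrow> bool" assume R: "R \<in> {(\<ge>), (\<le>)}" and
      hyp: "probW W (2^n) (\<lambda>ys. synth_lr V n i ys \<le> 1) \<ge> probW W (2^n) (\<lambda>ys. synth_lr V n i ys \<ge> 1)" and
      q1: "probW W (2 * 2^n) (cond_event V n i R True) > 0" and q0: "probW W (2 * 2^n) (cond_event V n i R False) > 0"
    have hk: "probW W (2^n) (\<lambda>z. L z \<ge> 1) \<le> probW W (2^n) (\<lambda>z. L z \<le> 1)"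
      using hyp by (simp add: L_def)
    show "gcond W V n i (2 * i - 1) R True \<ge> gcond W V n i (2 * i - 1) R False"
    proof (cases "R = (\<ge>)")
      case True
      show ?thesis unfolding True
        apply (rule main[where G="\<lambda>z. L z \<le> 1" and H="\<lambda>z. L z \<ge> 1"])
        using q1 q0 True hk apply simp_all
        subgoal for x z apply (simp only: minus_ge[unfolded One_nat_def] Lge Lle) by (rule m1[where uu="A True x" and vv="A False x" and ss="A True z" and tt="A False z"]; assumption)
        subgoal for x z apply (simp only: minus_ge[unfolded One_nat_def] Lge Lle not_le) by (rule m2[where uu="A True x" and vv="A False x" and ss="A True z" and tt="A False z"]; assumption)
        done
    next
      case False
      then have Rle: "R = (\<le>)" using R by simp
      show ?thesis unfolding Rle
        apply (rule main[where G="\<lambda>z. L z \<le> 1" and H="\<lambda>z. L z \<ge> 1"])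
        using q1 q0 Rle hk apply simp_all
        subgoal for x z apply (simp only: minus_le[unfolded One_nat_def] Lge Lle) by (rule m3[where uu="A True x" and vv="A False x" and ss="A True z" and tt="A False z"]; assumption)
        subgoal for x z apply (simp only: minus_le[unfolded One_nat_def] Lge Lle not_le) by (rule m4[where uu="A True x" and vv="A False x" and ss="A True z" and tt="A False z"]; assumption)
        done
    qed
  qed
  show ?thesis using part_a part_b by blast
qed

end
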